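(* Assume the setting and standing assumptions described in the context. If for some $\Delta\in\mathcal{D}$ the function $\kappa\mapsto\det[-(B\Delta C+\kappa^2J_2+\kappa^4J_4)]$ is initially positive, then there exists $\tilde\kappa>0$ such that $\rho(\Delta,\kappa)<0$ for all $0<\kappa\le\tilde\kappa$.
   Context: Let $n,m\ge 1$, $B\in\mathbb{Z}^{n\times m}$, $C\in\mathbb{Z}^{m\times n}$. Given bounds $0\le \Delta_j^-\le \Delta_j^+<\infty$ ($j=1,\dots,m$), let $\mathcal{D}$ be the set of diagonal matrices $\Delta=\mathrm{diag}(\Delta_1,\dots,\Delta_m)$ with $\Delta_j^-\le\Delta_j\le\Delta_j^+$. Let $J_2,J_4\in\mathbb{R}^{n\times n}$ be symmetric, with $J_2$ indefinite, $J_4$ negative semidefinite, and such that there exists $\bar\kappa$ with $\bar\kappa^2J_2+\bar\kappa^4J_4$ negative definite. Assumption: for every $\Delta\in\mathcal{D}$, $B\Delta C$ is singular and has $n-1$ eigenvalues (with multiplicity) with negative real part, and there is a nonzero $v\ge0$ with $v^\top B=0$. For real $\kappa\ge0$, $\rho(\Delta,\kappa)$ denotes the spectral abscissa (maximum real part of the eigenvalues) of $B\Delta C+\kappa^2J_2+\kappa^4J_4$. A function $f$ on $[0,\infty)$ is initially positive if there is $\hat\kappa>0$ with $f(\kappa)>0$ for all $\kappa\in(0,\hat\kappa)$. *)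

theory Defs
  imports "Jordan_Normal_Form.Jordan_Normal_Form"
begin

definition sym_mat :: "nat \<Rightarrow> real mat \<Rightarrow> bool" where
  "sym_mat n A \<longleftrightarrow> A \<in> carrier_mat n n \<and> transpose_mat A = A"

definition neg_semidef :: "nat \<Rightarrow> real mat \<Rightarrow> bool" where
  "neg_semidef n A \<longleftrightarrow> sym_mat n A \<and> (\<forall>x \<in> carrier_vec n. x \<bullet> (A *\<^sub>v x) \<le> 0)"

definition neg_def :: "nat \<Rightarrow> real mat \<Rightarrow> bool" where
  "neg_def n A \<longleftrightarrow> sym_mat n A \<and> (\<forall>x \<in> carrier_vec n. x \<noteq> 0\<^sub>v n \<longrightarrow> x \<bullet> (A *\<^sub>v x) < 0)"

definition indefinite :: "nat \<Rightarrow> real mat \<Rightarrow> bool" where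
  "indefinite n A \<longleftrightarrow> sym_mat n A \<and>
     (\<exists>x \<in> carrier_vec n. x \<bullet> (A *\<^sub>v x) > 0) \<and> (\<exists>y \<in> carrier_vec n. y \<bullet> (A *\<^sub>v y) < 0)"

definition cmat :: "real mat \<Rightarrow> complex mat" where
  "cmat A = map_mat complex_of_real A"

definition alg_mult :: "real mat \<Rightarrow> complex \<Rightarrow> nat" where
  "alg_mult A z = order z (char_poly (cmat A))"

definition num_neg_re_eigs :: "real mat \<Rightarrow> nat" where
  "num_neg_re_eigs A = (\<Sum>z \<in> {z. eigenvalue (cmat A) z \<and> Re z < 0}. alg_mult A z)"

definition spectral_abscissa :: "real mat \<Rightarrow> real" where
  "spectral_abscissa A = Max (Re ` {z. eigenvalue (cmat A) z})"

definition Dset :: "nat \<Rightarrow> (nat \<Rightarrow> real) \<Rightarrow> (nat \<Rightarrow> real) \<Rightarrow> real mat set" where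
  "Dset m lo hi = {D. D \<in> carrier_mat m m \<and> diagonal_mat D \<and> (\<forall>j<m. lo j \<le> D $$ (j,j) \<and> D $$ (j,j) \<le> hi j)}"

definition Mk :: "int mat \<Rightarrow> int mat \<Rightarrow> real mat \<Rightarrow> real mat \<Rightarrow> real mat \<Rightarrow> real \<Rightarrow> real mat" where
  "Mk B C J2 J4 D k = map_mat of_int B * D * map_mat of_int C + (k^2) \<cdot>\<^sub>m J2 + (k^4) \<cdot>\<^sub>m J4"

definition rho :: "int mat \<Rightarrow> int mat \<Rightarrow> real mat \<Rightarrow> real mat \<Rightarrow> real mat \<Rightarrow> real \<Rightarrow> real" where
  "rho B C J2 J4 D k = spectral_abscissa (Mk B C J2 J4 D k)"

definition initially_positive :: "(real \<Rightarrow> real) \<Rightarrow> bool" where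
  "initially_positive f \<longleftrightarrow> (\<exists>kh > 0. \<forall>k. 0 < k \<and> k < kh \<longrightarrow> f k > 0)"

end

theory Submission imports Defs "Jordan_Normal_Form.Spectral_Radius" begin


definition cpf :: "(real \<Rightarrow> complex poly) \<Rightarrow> bool" where
  "cpf f \<longleftrightarrow> (\<forall>k. continuous_on UNIV (\<lambda>t. coeff (f t) k))"

lemma cpf_const: "cpf (\<lambda>t. p)"
  unfolding cpf_def by (auto intro: continuous_intros)

lemma cpf_pCons_const: "continuous_on UNIV g \<Longrightarrow> cpf (\<lambda>t. [:g t:])"
  unfolding cpf_def
proof
  fix k assume "continuous_on UNIV g"
  then show "continuous_on UNIV (\<lambda>t. coeff [:g t:] k)"
    by (cases k) (auto intro: continuous_intros)
qed

lemma cpf_add: "cpf f \<Longrightarrow> cpf g \<Longrightarrow> cpf (\<lambda>t. f t + g t)"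
  unfolding cpf_def by (auto intro: continuous_intros)

lemma cpf_mult: "cpf f \<Longrightarrow> cpf g \<Longrightarrow> cpf (\<lambda>t. f t * g t)"
  unfolding cpf_def coeff_mult by (auto intro!: continuous_intros)

lemma cpf_sum: "finite I \<Longrightarrow> (\<And>i. i \<in> I \<Longrightarrow> cpf (f i)) \<Longrightarrow> cpf (\<lambda>t. \<Sum>i\<in>I. f i t)"
  by (induct I rule: finite_induct) (auto intro: cpf_add cpf_const)

lemma cpf_prod: "finite I \<Longrightarrow> (\<And>i. i \<in> I \<Longrightarrow> cpf (f i)) \<Longrightarrow> cpf (\<lambda>t. \<Prod>i\<in>I. f i t)"
  by (induct I rule: finite_induct) (auto intro: cpf_mult cpf_const)

lemma cpf_char_poly:
  fixes A :: "real \<Rightarrow> complex mat"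
  assumes A: "\<And>t. A t \<in> carrier_mat n n"
    and c: "\<And>i j. i < n \<Longrightarrow> j < n \<Longrightarrow> continuous_on UNIV (\<lambda>t. A t $$ (i,j))"
  shows "cpf (\<lambda>t. char_poly (A t))"
proof -
  have cm: "\<And>t. char_poly_matrix (A t) \<in> carrier_mat n n" using A by simp
  have ent: "cpf (\<lambda>t. char_poly_matrix (A t) $$ (i,j))" if "i < n" "j < n" for i j
  proof -
    have "char_poly_matrix (A t) $$ (i,j) = (if i = j then [:0,1:] else 0) + [: - (A t $$ (i,j)) :]" for t
      using that A[of t] by (auto simp: char_poly_matrix_def)
    moreover have "cpf (\<lambda>t. (if i = j then [:0,1:] else 0) + [: - (A t $$ (i,j)) :])"
      by (intro cpf_add cpf_const cpf_pCons_const continuous_intros c that)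
    ultimately show ?thesis by simp
  qed
  show ?thesis
    unfolding char_poly_def det_def'[OF cm]
    apply (rule cpf_sum)
     apply (simp add: finite_permutations)
    apply (rule cpf_mult[OF cpf_const])
    apply (rule cpf_prod)
     apply simp
    apply (rule ent)
     apply simp
    apply (auto simp: permutes_def)
    done
qed



lemma root_bound:
  fixes p :: "complex poly"
  assumes d: "degree p = d" and lc: "coeff p d = 1" and K: "\<And>i. i < d \<Longrightarrow> cmod (coeff p i) \<le> K"
    and r: "poly p z = 0"
  shows "cmod z \<le> max 1 (real d * K)"
proof (rule ccontr)
  assume "\<not> ?thesis"
  hence z1: "cmod z > 1" and zK: "cmod z > real d * K" by auto
  have "poly p z = (\<Sum>i\<le>d. coeff p i * z ^ i)" using d by (simp add: poly_altdef)
  also have "\<dots> = (\<Sum>i<d. coeff p i * z ^ i) + z ^ d" unfolding lessThan_Suc_atMost[symmetric] sum.lessThan_Suc using lc by simp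
  finally have "(\<Sum>i<d. coeff p i * z ^ i) + z ^ d = 0" using r by simp
  hence "z ^ d = - (\<Sum>i<d. coeff p i * z ^ i)" by (simp add: eq_neg_iff_add_eq_0 add.commute)
  hence "cmod z ^ d = cmod (\<Sum>i<d. coeff p i * z ^ i)" by (metis norm_minus_cancel norm_power)
  also have "\<dots> \<le> (\<Sum>i<d. cmod (coeff p i) * cmod z ^ i)"
    by (rule order.trans[OF norm_sum]) (simp add: norm_mult norm_power)
  also have "\<dots> \<le> (\<Sum>i<d. K * cmod z ^ (d - 1))"
  proof (rule sum_mono)
    fix i assume i: "i \<in> {..<d}"
    have "cmod z ^ i \<le> cmod z ^ (d - 1)" using i z1 by (intro power_increasing) auto
    moreover have "K \<ge> 0" using K[of i] i by (meson lessThan_iff norm_ge_zero order.trans)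
    ultimately show "cmod (coeff p i) * cmod z ^ i \<le> K * cmod z ^ (d - 1)"
      using K[of i] i by (intro mult_mono) auto
  qed
  also have "\<dots> = real d * K * cmod z ^ (d - 1)" by simp
  finally have le: "cmod z ^ d \<le> real d * K * cmod z ^ (d - 1)" .
  have "d > 0"
  proof (rule ccontr)
    assume "\<not> d > 0" hence "d = 0" by simp
    then show False using r d lc by (auto simp: poly_altdef)
  qed
  then have "cmod z ^ d = cmod z * cmod z ^ (d - 1)" by (cases d) auto
  with le have "cmod z * cmod z ^ (d - 1) \<le> real d * K * cmod z ^ (d - 1)" by simp
  moreover have "cmod z ^ (d - 1) > 0" by (rule zero_less_power) (use z1 in linarith)
  ultimately have "cmod z \<le> real d * K" by simp
  with zK show False by simp
qed


lemma bw_complex: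
  fixes z :: "nat \<Rightarrow> complex"
  assumes b: "\<And>j. cmod (z j) \<le> R"
  shows "\<exists>r L. strict_mono r \<and> (\<lambda>j. z (r j)) \<longlonglongrightarrow> L"
proof -
  obtain r1 where r1: "strict_mono r1" "monoseq (\<lambda>j. Re (z (r1 j)))" using seq_monosub[of "\<lambda>j. Re (z j)"] by blast
  have "Bseq (\<lambda>j. Re (z (r1 j)))"
  proof (rule BseqI'[of _ R])
    fix j show "norm (Re (z (r1 j))) \<le> R" using abs_Re_le_cmod[of "z (r1 j)"] b[of "r1 j"] by simp
  qed
  then have "convergent (\<lambda>j. Re (z (r1 j)))" using r1(2) by (rule Bseq_monoseq_convergent)
  then obtain a where a: "(\<lambda>j. Re (z (r1 j))) \<longlonglongrightarrow> a" unfolding convergent_def by blast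
  obtain r2 where r2: "strict_mono r2" "monoseq (\<lambda>j. Im (z (r1 (r2 j))))" using seq_monosub[of "\<lambda>j. Im (z (r1 j))"] by blast
  have "Bseq (\<lambda>j. Im (z (r1 (r2 j))))"
  proof (rule BseqI'[of _ R])
    fix j show "norm (Im (z (r1 (r2 j)))) \<le> R" using abs_Im_le_cmod[of "z (r1 (r2 j))"] b[of "r1 (r2 j)"] by simp
  qed
  then have "convergent (\<lambda>j. Im (z (r1 (r2 j))))" using r2(2) by (rule Bseq_monoseq_convergent)
  then obtain b where bb: "(\<lambda>j. Im (z (r1 (r2 j)))) \<longlonglongrightarrow> b" unfolding convergent_def by blast
  have a2: "(\<lambda>j. Re (z (r1 (r2 j)))) \<longlonglongrightarrow> a"
    using LIMSEQ_subseq_LIMSEQ[OF a r2(1)] by (simp add: o_def)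
  have "(\<lambda>j. Complex (Re (z (r1 (r2 j)))) (Im (z (r1 (r2 j))))) \<longlonglongrightarrow> Complex a b"
    by (intro tendsto_Complex a2 bb)
  hence "(\<lambda>j. z ((r1 \<circ> r2) j)) \<longlonglongrightarrow> Complex a b" by simp
  moreover have "strict_mono (r1 \<circ> r2)" using r1(1) r2(1) by (rule strict_mono_o)
  ultimately show ?thesis by blast
qed
theorem lemma2:
  fixes n m :: nat and B C :: "int mat" and lo hi :: "nat \<Rightarrow> real" and J2 J4 :: "real mat"
    and D :: "real mat"
  assumes "n \<ge> 1" and "m \<ge> 1"
    and "B \<in> carrier_mat n m" and "C \<in> carrier_mat m n"
    and "\<forall>j<m. 0 \<le> lo j \<and> lo j \<le> hi j"
    and "indefinite n J2" and "neg_semidef n J4"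
    and "\<exists>kb. neg_def n (kb^2 \<cdot>\<^sub>m J2 + kb^4 \<cdot>\<^sub>m J4)"
    and "\<forall>E \<in> Dset m lo hi.
           det (map_mat of_int B * E * map_mat of_int C) = 0 \<and>
           num_neg_re_eigs (map_mat of_int B * E * map_mat of_int C) = n - 1"
    and "\<exists>v :: real vec \<in> carrier_vec n. v \<noteq> 0\<^sub>v n \<and> (\<forall>i<n. v $ i \<ge> 0) \<and>
           transpose_mat (map_mat of_int B) *\<^sub>v v = 0\<^sub>v m"
    and "D \<in> Dset m lo hi"
    and "initially_positive (\<lambda>k. det (- Mk B C J2 J4 D k))"
  shows "\<exists>kt > 0. \<forall>k. 0 < k \<and> k \<le> kt \<longrightarrow> rho B C J2 J4 D k < 0"
proof -
  define A0 :: "real mat" where "A0 = map_mat of_int B * D * map_mat of_int C"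
  define M where "M = Mk B C J2 J4 D"
  define P where "P = (\<lambda>t. char_poly (cmat (M t)))"
  define c where "c = (\<lambda>i t. coeff (P t) i)"
  have J2: "J2 \<in> carrier_mat n n" using assms(6) unfolding indefinite_def sym_mat_def by auto
  have J4: "J4 \<in> carrier_mat n n" using assms(7) unfolding neg_semidef_def sym_mat_def by auto
  have Dc: "D \<in> carrier_mat m m" using assms(11) unfolding Dset_def by auto
  have A0c: "A0 \<in> carrier_mat n n" using assms(3,4) Dc unfolding A0_def by auto
  have Mdef: "M t = A0 + (t^2) \<cdot>\<^sub>m J2 + (t^4) \<cdot>\<^sub>m J4" for t
    unfolding M_def Mk_def A0_def by simp
  have Mc: "M t \<in> carrier_mat n n" for t unfolding Mdef using A0c J2 J4 by auto
  have Ment: "M t $$ (i,j) = A0 $$ (i,j) + t^2 * J2 $$ (i,j) + t^4 * J4 $$ (i,j)" if "i < n" "j < n" for t i j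
    unfolding Mdef using A0c J2 J4 that by auto
  have M0: "M 0 = A0" by (rule eq_matI) (use A0c J2 J4 Mc in \<open>auto simp: Ment\<close>)
  have cMc: "cmat (M t) \<in> carrier_mat n n" for t unfolding cmat_def using Mc by simp
  have deg: "degree (P t) = n" and lc: "coeff (P t) n = 1" for t
    using degree_monic_char_poly[OF cMc[of t]] unfolding P_def by auto
  have Pnz: "P t \<noteq> 0" for t using lc[of t] by auto
  have eig: "eigenvalue (cmat (M t)) z \<longleftrightarrow> poly (P t) z = 0" for t z
    unfolding P_def by (rule eigenvalue_root_char_poly[OF cMc])
  have cont: "continuous_on UNIV (c i)" for i
  proof -
    have "cpf P" unfolding P_def
    proof (rule cpf_char_poly[OF cMc])
      fix i j assume ij: "i < n" "j < n"
      have "cmat (M t) $$ (i,j) = complex_of_real (A0 $$ (i,j) + t^2 * J2 $$ (i,j) + t^4 * J4 $$ (i,j))" for t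
        unfolding cmat_def using Mc[of t] ij by (simp add: Ment)
      then show "continuous_on UNIV (\<lambda>t. cmat (M t) $$ (i, j))"
        by (simp del: of_real_add of_real_mult) (intro continuous_intros)
    qed
    then show ?thesis unfolding cpf_def c_def by blast
  qed
  have Preal: "P t = map_poly complex_of_real (char_poly (M t))" for t
    unfolding P_def cmat_def by (rule of_real_hom.char_poly_hom[OF Mc])
  have c0: "c 0 t = complex_of_real (det (- M t))" for t
  proof -
    have "c 0 t = poly (P t) 0" unfolding c_def by (simp add: poly_0_coeff_0)
    also have "\<dots> = complex_of_real (poly (char_poly (M t)) 0)" unfolding Preal by simp
    also have "char_matrix (M t) 0 = M t" by (rule eq_matI) (use Mc[of t] in \<open>auto simp: char_matrix_def\<close>)
    hence "poly (char_poly (M t)) 0 = det (- M t)" using char_poly_matrix[OF Mc[of t], of 0] by simp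
    finally show ?thesis .
  qed
  have hypD: "det A0 = 0" "num_neg_re_eigs A0 = n - 1" using assms(9,11) unfolding A0_def by auto
  define S where "S = {z. poly (P 0) z = 0}"
  have finS: "finite S" unfolding S_def by (rule poly_roots_finite[OF Pnz])
  have sumle: "(\<Sum>z\<in>S. order z (P 0)) \<le> n" using order_sum_degree[OF Pnz[of 0]] deg[of 0] unfolding S_def by simp
  have neg: "(\<Sum>z\<in>S \<inter> {z. Re z < 0}. order z (P 0)) = n - 1"
  proof -
    have "{z. eigenvalue (cmat A0) z \<and> Re z < 0} = S \<inter> {z. Re z < 0}"
      unfolding S_def using eig[of 0] M0 by auto
    then show ?thesis using hypD(2) unfolding num_neg_re_eigs_def alg_mult_def P_def M0 by simp
  qed
  have split: "(\<Sum>z\<in>S. order z (P 0)) = (\<Sum>z\<in>S \<inter> {z. Re z < 0}. order z (P 0)) + (\<Sum>z\<in>S - {z. Re z < 0}. order z (P 0))"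
    by (rule sum.Int_Diff[OF finS])
  have pos1: "(\<Sum>z\<in>S - {z. Re z < 0}. order z (P 0)) \<le> 1" using sumle split neg by linarith
  have root0: "poly (P 0) 0 = 0"
  proof -
    have "char_matrix (cmat A0) 0 = cmat A0" by (rule eq_matI) (use A0c in \<open>auto simp: char_matrix_def cmat_def\<close>)
    moreover have "det (cmat A0) = 0" unfolding cmat_def of_real_hom.hom_det hypD(1) by simp
    ultimately have "eigenvalue (cmat (M 0)) 0" unfolding M0 using eigenvalue_det[of "cmat A0" n 0] A0c
      by (simp add: cmat_def)
    then show ?thesis using eig by blast
  qed
  have S0: "0 \<in> S - {z. Re z < 0}" unfolding S_def using root0 by simp
  have ord0pos: "order 0 (P 0) \<ge> 1" using order_gt_0_iff[OF Pnz[of 0], of 0] root0 by linarith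
  have ord0: "order 0 (P 0) = 1"
  proof -
    have "order 0 (P 0) \<le> (\<Sum>z\<in>S - {z. Re z < 0}. order z (P 0))"
      by (rule member_le_sum[OF S0]) (use finS in auto)
    with pos1 ord0pos show ?thesis by linarith
  qed
  have only0: "z = 0" if "poly (P 0) z = 0" "Re z \<ge> 0" for z
  proof (rule ccontr)
    assume z0: "z \<noteq> 0"
    have zS: "z \<in> S - {z. Re z < 0}" unfolding S_def using that by auto
    have "order z (P 0) \<ge> 1" using order_gt_0_iff[OF Pnz[of 0], of z] that by linarith
    have "(\<Sum>w\<in>{0,z}. order w (P 0)) \<le> (\<Sum>z\<in>S - {z. Re z < 0}. order z (P 0))"
      by (rule sum_mono2) (use finS S0 zS in auto)
    moreover have "(\<Sum>w\<in>{0,z}. order w (P 0)) = order 0 (P 0) + order z (P 0)" using z0 by simp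
    ultimately show False using pos1 ord0pos \<open>order z (P 0) \<ge> 1\<close> by linarith
  qed
  define pr where "pr = char_poly A0"
  have P0r: "P 0 = map_poly complex_of_real pr" unfolding pr_def using Preal[of 0] M0 by simp
  have "coeff pr 0 = 0"
  proof -
    have "complex_of_real (coeff pr 0) = coeff (P 0) 0" unfolding P0r by (simp add: coeff_map_poly)
    also have "\<dots> = poly (P 0) 0" by (simp add: poly_0_coeff_0)
    finally show ?thesis using root0 by simp
  qed
  moreover obtain a qr where "pr = pCons a qr" by (cases pr)
  ultimately have pr: "pr = pCons 0 qr" by simp
  define Q where "Q = map_poly complex_of_real qr"
  have P0Q: "P 0 = pCons 0 Q" unfolding P0r pr Q_def by (simp add: of_real_hom.map_poly_pCons_hom)
  have Qnz: "Q \<noteq> 0" using Pnz[of 0] P0Q by auto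
  have Q0: "poly Q 0 \<noteq> 0"
  proof
    assume "poly Q 0 = 0"
    hence "order 0 Q \<ge> 1" using order_gt_0_iff[OF Qnz, of 0] by linarith
    have e: "P 0 = [:-0,1:] ^ 1 * Q" unfolding P0Q by simp
    have "order 0 ([:-0,1:] ^ 1 * Q) = order 0 ([:-0,1:] ^ 1 :: complex poly) + order 0 Q"
      by (rule Polynomial.order_mult) (use Pnz[of 0] e in simp)
    moreover have "order 0 ([:-0,1:] ^ 1 :: complex poly) = 1" by (rule order_power_n_n)
    ultimately have "order 0 (P 0) = 1 + order 0 Q" using e by simp
    with ord0 \<open>order 0 Q \<ge> 1\<close> show False by linarith
  qed
  have qr_nz: "poly qr x \<noteq> 0" if "x \<ge> 0" for x
  proof
    assume "poly qr x = 0"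
    hence Qx: "poly Q (complex_of_real x) = 0" unfolding Q_def by simp
    show False
    proof (cases "x = 0")
      case True thus False using Q0 Qx by simp
    next
      case False
      have "poly (P 0) (complex_of_real x) = 0" unfolding P0Q using Qx by simp
      from only0[OF this] False that show False by simp
    qed
  qed
  have prc: "pr \<in> UNIV" by simp
  have "degree pr = n \<and> coeff pr n = 1" using degree_monic_char_poly[OF A0c] unfolding pr_def by auto
  hence lcpr: "lead_coeff pr = 1" by simp
  have qrnz: "qr \<noteq> 0" using lcpr pr by auto
  have lcq: "lead_coeff qr = 1" using lcpr pr qrnz by simp
  obtain X where X: "\<And>x. x \<ge> X \<Longrightarrow> poly qr x \<ge> 1" using poly_pinfty_gt_lc[of qr] lcq by auto
  have q0pos: "poly qr 0 > 0"
  proof (rule ccontr)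
    assume "\<not> poly qr 0 > 0"
    with qr_nz[of 0] have neg0: "poly qr 0 < 0" by simp
    have pX: "poly qr (max 1 X) > 0" using X[of "max 1 X"] by simp
    have m0: "(0::real) < max 1 X" by simp
    from poly_IVT_pos[OF m0 neg0 pX] obtain x where "0 < x" "poly qr x = 0" by blast
    with qr_nz[of x] show False by simp
  qed
  have c10: "c 1 0 = complex_of_real (poly qr 0)"
    unfolding c_def P0Q Q_def by (simp add: coeff_map_poly poly_0_coeff_0)
  have c10pos: "Re (c 1 0) > 0" using c10 q0pos by simp
  have polyc: "poly (P t) w = (\<Sum>i\<le>n. c i t * w ^ i)" for t w
    unfolding c_def using deg[of t] by (simp add: poly_altdef)
  have polyc2: "poly (P t) w = c 0 t + w * (\<Sum>i<n. c (Suc i) t * w ^ i)" for t w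
    unfolding polyc sum.atMost_shift by (simp add: sum_distrib_left ac_simps)
  have rho_ev: "\<exists>z. poly (P k) z = 0 \<and> Re z \<ge> 0" if "\<not> rho B C J2 J4 D k < 0" for k
  proof -
    define E where "E = {z. eigenvalue (cmat (M k)) z}"
    have fin: "finite E" and ne: "E \<noteq> {}"
      using card_finite_spectrum(1)[OF cMc[of k]] spectrum_non_empty[OF cMc[of k]] assms(1)
      unfolding E_def spectrum_def by auto
    have "Max (Re ` E) \<in> Re ` E" using fin ne by (intro Max_in) auto
    moreover have "Max (Re ` E) \<ge> 0" using that unfolding rho_def spectral_abscissa_def E_def M_def by simp
    ultimately obtain z where "z \<in> E" "Re z \<ge> 0" by auto
    then show ?thesis unfolding E_def eig by blast
  qed
  show ?thesis
  proof (rule ccontr)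
    assume H: "\<not> ?thesis"
    obtain kh where kh: "kh > 0" "\<And>k. 0 < k \<Longrightarrow> k < kh \<Longrightarrow> det (- M k) > 0"
      using assms(12) unfolding initially_positive_def M_def by auto
    have "\<forall>j. \<exists>k. 0 < k \<and> k \<le> min (kh/2) (inverse (real (Suc j))) \<and> (\<exists>z. poly (P k) z = 0 \<and> Re z \<ge> 0)"
    proof
      fix j
      have "min (kh/2) (inverse (real (Suc j))) > 0" using kh by simp
      with H obtain k where "0 < k" "k \<le> min (kh/2) (inverse (real (Suc j)))" "\<not> rho B C J2 J4 D k < 0"
        by blast
      with rho_ev show "\<exists>k. 0 < k \<and> k \<le> min (kh/2) (inverse (real (Suc j))) \<and> (\<exists>z. poly (P k) z = 0 \<and> Re z \<ge> 0)"
        by blast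
    qed
    then obtain \<kappa> where \<kappa>0: "\<forall>j. 0 < \<kappa> j \<and> \<kappa> j \<le> min (kh/2) (inverse (real (Suc j))) \<and>
      (\<exists>z. poly (P (\<kappa> j)) z = 0 \<and> Re z \<ge> 0)"
      by (rule choice_iff[THEN iffD1, THEN exE])
    hence \<kappa>: "\<And>j. 0 < \<kappa> j" "\<And>j. \<kappa> j \<le> min (kh/2) (inverse (real (Suc j)))" by auto
    from \<kappa>0 have "\<forall>j. \<exists>z. poly (P (\<kappa> j)) z = 0 \<and> Re z \<ge> 0" by blast
    then obtain z where z0: "\<forall>j. poly (P (\<kappa> j)) (z j) = 0 \<and> Re (z j) \<ge> 0"
      by (rule choice_iff[THEN iffD1, THEN exE])
    hence z: "\<And>j. poly (P (\<kappa> j)) (z j) = 0" "\<And>j. Re (z j) \<ge> 0" by auto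
    have \<kappa>lim: "\<kappa> \<longlonglongrightarrow> 0"
    proof (rule real_tendsto_sandwich[OF _ _ tendsto_const LIMSEQ_inverse_real_of_nat])
      show "\<forall>\<^sub>F j in sequentially. 0 \<le> \<kappa> j" using \<kappa>(1) by (simp add: less_imp_le)
      show "\<forall>\<^sub>F j in sequentially. \<kappa> j \<le> inverse (real (Suc j))" using \<kappa>(2) by simp
    qed
    have \<kappa>kh: "0 < \<kappa> j \<and> \<kappa> j < kh" for j using \<kappa>(1)[of j] \<kappa>(2)[of j] kh(1) by simp
    have climgen: "(\<lambda>j. c i (s j)) \<longlonglongrightarrow> c i 0" if "s \<longlonglongrightarrow> 0" for i s
      using continuous_on_tendsto_compose[OF cont[of i] that] by simp
    define Kj where "Kj = (\<lambda>j. \<Sum>i<n. cmod (c i (\<kappa> j)))"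
    have "Kj \<longlonglongrightarrow> (\<Sum>i<n. cmod (c i 0))" unfolding Kj_def
      by (intro tendsto_intros climgen \<kappa>lim)
    hence "Bseq Kj" by (rule convergent_imp_Bseq[OF convergentI])
    then obtain Kb where Kb: "\<And>j. norm (Kj j) \<le> Kb" unfolding Bseq_def by auto
    have zb: "cmod (z j) \<le> max 1 (real n * Kb)" for j
    proof (rule root_bound[OF deg lc _ z(1)])
      fix i assume "i < n"
      then have "cmod (coeff (P (\<kappa> j)) i) \<le> Kj j" unfolding Kj_def c_def
        by (intro member_le_sum) auto
      also have "\<dots> \<le> Kb" using Kb[of j] by simp
      finally show "cmod (coeff (P (\<kappa> j)) i) \<le> Kb" .
    qed
    obtain r L where r: "strict_mono r" "(\<lambda>j. z (r j)) \<longlonglongrightarrow> L" using bw_complex[of z "max 1 (real n * Kb)"] zb by blast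
    define \<kappa>' where "\<kappa>' = (\<lambda>j. \<kappa> (r j))"
    define z' where "z' = (\<lambda>j. z (r j))"
    have \<kappa>'lim: "\<kappa>' \<longlonglongrightarrow> 0" unfolding \<kappa>'_def using LIMSEQ_subseq_LIMSEQ[OF \<kappa>lim r(1)] by (simp add: o_def)
    have z'lim: "z' \<longlonglongrightarrow> L" unfolding z'_def using r(2) .
    have ReL: "Re L \<ge> 0"
    proof (rule LIMSEQ_le_const[OF tendsto_Re[OF z'lim]])
      show "\<exists>N. \<forall>j\<ge>N. 0 \<le> Re (z' j)" unfolding z'_def using z(2) by blast
    qed
    have "(\<lambda>j. \<Sum>i\<le>n. c i (\<kappa>' j) * z' j ^ i) \<longlonglongrightarrow> (\<Sum>i\<le>n. c i 0 * L ^ i)"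
      by (intro tendsto_intros climgen \<kappa>'lim z'lim)
    moreover have "(\<lambda>j. \<Sum>i\<le>n. c i (\<kappa>' j) * z' j ^ i) = (\<lambda>j. 0)"
      using z(1) unfolding \<kappa>'_def z'_def polyc by simp
    ultimately have lim0: "(\<lambda>j. 0) \<longlonglongrightarrow> (\<Sum>i\<le>n. c i 0 * L ^ i)" by simp
    have "(\<Sum>i\<le>n. c i 0 * L ^ i) = 0" using LIMSEQ_unique[OF lim0 tendsto_const] .
    hence "poly (P 0) L = 0" unfolding polyc .
    from only0[OF this ReL] have L0: "L = 0" .
    define w where "w = (\<lambda>j. \<Sum>i<n. c (Suc i) (\<kappa>' j) * z' j ^ i)"
    have "w \<longlonglongrightarrow> (\<Sum>i<n. c (Suc i) 0 * L ^ i)" unfolding w_def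
      by (intro tendsto_intros climgen \<kappa>'lim z'lim)
    moreover have "(\<Sum>i<n. c (Suc i) 0 * L ^ i) = c 1 0"
    proof -
      obtain n0 where "n = Suc n0" using assms(1) by (cases n) auto
      then show ?thesis unfolding L0 sum.lessThan_Suc_shift by simp
    qed
    ultimately have "(\<lambda>j. Re (w j)) \<longlonglongrightarrow> Re (c 1 0)" by (simp add: tendsto_Re)
    from order_tendstoD(1)[OF this c10pos] obtain N where N: "\<And>j. j \<ge> N \<Longrightarrow> Re (w j) > 0"
      unfolding eventually_sequentially by auto
    define d where "d = det (- M (\<kappa>' N))"
    have dpos: "d > 0" unfolding d_def \<kappa>'_def using kh(2) \<kappa>kh by blast
    have "0 = c 0 (\<kappa>' N) + z' N * w N" using z(1)[of "r N"] unfolding polyc2 w_def \<kappa>'_def z'_def by simp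
    hence eq: "z' N * w N = - complex_of_real d" unfolding c0 d_def by (simp add: eq_neg_iff_add_eq_0 add.commute)
    have wpos: "Re (w N) > 0" using N by simp
    hence "w N \<noteq> 0" by auto
    hence "z' N = - complex_of_real d / w N" using eq by (simp add: field_simps)
    hence "Re (z' N) = - d * Re (w N) / ((Re (w N))\<^sup>2 + (Im (w N))\<^sup>2)" by (simp add: Re_divide)
    moreover have "(Re (w N))\<^sup>2 + (Im (w N))\<^sup>2 > 0" using wpos by (simp add: add_pos_nonneg)
    ultimately have "Re (z' N) < 0" using dpos wpos by (simp add: divide_neg_pos)
    with z(2)[of "r N"] show False unfolding z'_def by simp
  qed
qed
end
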